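(* Let $q$ be a prime power, $\mu$ a positive integer, and $S$ a minimal $(1,\mu)$-saturating set in $PG(2,q)$. Then (i) $\mu\le (q+1)\binom{q}{2}$; (ii) $|S|\le q+\mu+1$ if $\mu\le q+2$, and $|S|\le \min\{q+\mu,\;q^2+q\}$ if $\mu\ge q+3$.
   Context: $PG(2,q)$ is the projective plane over $\mathbb{F}_q$. For a point set $S$, a secant of $S$ is a line $\ell$ with $|\ell\cap S|\ge2$, counted with multiplicity $\binom{|\ell\cap S|}{2}$. A set $S$ of points of $PG(2,q)$ is $(1,\mu)$-saturating if (M1) $S$ spans $PG(2,q)$, (M2) $S\neq PG(2,q)$, and (M3) every point $Q\notin S$ lies on secants of $S$ whose multiplicities sum to at least $\mu$. A $(1,\mu)$-saturating set of size $n$ is minimal if it does not contain a $(1,\mu)$-saturating set of size $n-1$. *)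

theory Defs
  imports Main
begin

text \<open>Projective plane PG(2,q) over a finite field 'a with q = CARD('a).
  A point is a 1-dimensional subspace minus zero, i.e. the set of nonzero
  scalar multiples of a nonzero vector of 'a^3 (represented as triples).\<close>

definition pg_points :: "('a::field \<times> 'a \<times> 'a) set set" where
  "pg_points = { {(c*x, c*y, c*z) | c. c \<noteq> 0} | x y z. (x, y, z) \<noteq> (0, 0, 0)}"

definition pg_lines :: "('a::field \<times> 'a \<times> 'a) set set set" where
  "pg_lines = { {P \<in> pg_points. \<forall>(x, y, z) \<in> P. a*x + b*y + c*z = 0} | a b c.
                 (a, b, c) \<noteq> (0, 0, 0)}"

text \<open>S spans PG(2,q): S is not contained in any proper subspace, i.e. in no line
  (points and the empty set lie in lines).\<close>

definition pg_spans :: "('a::field \<times> 'a \<times> 'a) set set \<Rightarrow> bool" where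
  "pg_spans S \<longleftrightarrow> \<not> (\<exists>l \<in> pg_lines. S \<subseteq> l)"

definition secant_mult :: "('a::field \<times> 'a \<times> 'a) set set \<Rightarrow> ('a \<times> 'a \<times> 'a) set \<Rightarrow> nat" where
  "secant_mult S Q = (\<Sum>l \<in> {l \<in> pg_lines. Q \<in> l \<and> card (l \<inter> S) \<ge> 2}. card (l \<inter> S) choose 2)"

definition saturating :: "nat \<Rightarrow> ('a::field \<times> 'a \<times> 'a) set set \<Rightarrow> bool" where
  "saturating \<mu> S \<longleftrightarrow> S \<subseteq> pg_points \<and> pg_spans S \<and> S \<noteq> pg_points \<and>
     (\<forall>Q \<in> pg_points - S. secant_mult S Q \<ge> \<mu>)"

definition minimal_saturating :: "nat \<Rightarrow> ('a::field \<times> 'a \<times> 'a) set set \<Rightarrow> bool" where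
  "minimal_saturating \<mu> S \<longleftrightarrow> saturating \<mu> S \<and>
     \<not> (\<exists>T \<subseteq> S. saturating \<mu> T \<and> card T = card S - 1)"

end

theory Submission
  imports Defs
begin


definition cls :: "('a::field \<times> 'a \<times> 'a) \<Rightarrow> ('a \<times> 'a \<times> 'a) set" where
  "cls v = {(c * fst v, c * fst (snd v), c * snd (snd v)) | c. c \<noteq> 0}"

lemma mem_cls: "((x'::'a::field), y', z') \<in> cls (x, y, z) \<longleftrightarrow> (\<exists>c. c \<noteq> 0 \<and> x' = c*x \<and> y' = c*y \<and> z' = c*z)"
  by (auto simp: cls_def)

lemma pts_eq: "pg_points = {cls (x, y, z) | x y z. ((x::'a::field), y, z) \<noteq> (0, 0, 0)}"
  by (simp add: pg_points_def cls_def)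

lemma cls_self: "((x::'a::field), y, z) \<in> cls (x, y, z)"
  unfolding mem_cls by (rule exI[of _ 1]) simp

lemma cls_scale: assumes "(k::'a::field) \<noteq> 0" shows "cls (k*x, k*y, k*z) = cls (x, y, z)"
proof
  show "cls (k*x, k*y, k*z) \<subseteq> cls (x, y, z)"
    using assms by (auto simp: cls_def)
  show "cls (x, y, z) \<subseteq> cls (k*x, k*y, k*z)"
  proof
    fix v assume "v \<in> cls (x, y, z)"
    then obtain c where c: "c \<noteq> 0" "v = (c*x, c*y, c*z)" by (auto simp: cls_def)
    have "v = ((c/k)*(k*x), (c/k)*(k*y), (c/k)*(k*z))" using c assms by simp
    moreover have "c/k \<noteq> 0" using c assms by simp
    moreover have "((c/k)*(k*x), (c/k)*(k*y), (c/k)*(k*z)) \<in> cls (k*x, k*y, k*z)"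
      unfolding mem_cls using \<open>c/k \<noteq> 0\<close> by blast
    ultimately show "v \<in> cls (k*x, k*y, k*z)" by simp
  qed
qed

lemma pt_cases:
  assumes "P \<in> pg_points"
  obtains x y z where "((x::'a::field), y, z) \<noteq> (0, 0, 0)" "P = cls (x, y, z)"
  using assms unfolding pts_eq by blast

lemma pt_rep:
  assumes "P \<in> pg_points" "((x::'a::field), y, z) \<in> P"
  shows "P = cls (x, y, z) \<and> (x, y, z) \<noteq> (0, 0, 0)"
proof -
  obtain u1 u2 u3 where u: "(u1, u2, u3) \<noteq> (0, 0, 0)" "P = cls (u1, u2, u3)"
    using assms(1) by (rule pt_cases)
  then obtain c where c: "c \<noteq> 0" "x = c*u1" "y = c*u2" "z = c*u3"
    using assms(2) mem_cls by blast
  have "P = cls (x, y, z)" using c u cls_scale[of c u1 u2 u3] by simp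
  moreover have "(x, y, z) \<noteq> (0, 0, 0)" using c u by auto
  ultimately show ?thesis by blast
qed

lemma cls_pt: "((x::'a::field), y, z) \<noteq> (0, 0, 0) \<Longrightarrow> cls (x, y, z) \<in> pg_points"
  unfolding pts_eq by blast

lemma pt_ex: assumes "P \<in> pg_points" shows "\<exists>v. v \<in> (P :: ('a::field \<times> 'a \<times> 'a) set)"
  using assms by (rule pt_cases) (use cls_self in blast)

lemma on_line:
  assumes "P \<in> pg_points" "((x::'a::field), y, z) \<in> P"
  shows "(\<forall>(x', y', z') \<in> P. a*x' + b*y' + c*z' = 0) \<longleftrightarrow> a*x + b*y + c*z = 0"
proof -
  have P: "P = cls (x, y, z)" using pt_rep[OF assms] by blast
  show ?thesis
  proof
    assume "\<forall>(x', y', z') \<in> P. a*x' + b*y' + c*z' = 0"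
    then show "a*x + b*y + c*z = 0" using assms(2) by blast
  next
    assume h: "a*x + b*y + c*z = 0"
    show "\<forall>(x', y', z') \<in> P. a*x' + b*y' + c*z' = 0"
    proof (clarify)
      fix x' y' z' assume "(x', y', z') \<in> P"
      then obtain k where "x' = k*x" "y' = k*y" "z' = k*z" using P mem_cls by blast
      then have "a*x' + b*y' + c*z' = k*(a*x + b*y + c*z)" by (simp add: algebra_simps)
      then show "a*x' + b*y' + c*z' = 0" using h by simp
    qed
  qed
qed

definition lineof :: "'a::field \<Rightarrow> 'a \<Rightarrow> 'a \<Rightarrow> ('a \<times> 'a \<times> 'a) set set" where
  "lineof a b c = {P \<in> pg_points. \<forall>(x, y, z) \<in> P. a*x + b*y + c*z = 0}"

lemma lines_eq: "pg_lines = {lineof a b c | a b c. ((a::'a::field), b, c) \<noteq> (0, 0, 0)}"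
  by (simp add: pg_lines_def lineof_def)

lemma lineof_scale: assumes "(k::'a::field) \<noteq> 0" shows "lineof (k*a) (k*b) (k*c) = lineof a b c"
proof -
  have "\<And>P. P \<in> pg_points \<Longrightarrow> (\<forall>(x, y, z) \<in> P. k*a*x + k*b*y + k*c*z = 0) \<longleftrightarrow> (\<forall>(x, y, z) \<in> P. a*x + b*y + c*z = 0)"
  proof -
    fix P :: "('a \<times> 'a \<times> 'a) set" assume "P \<in> pg_points"
    have "\<And>x y z. k*a*x + k*b*y + k*c*z = k*(a*x + b*y + c*z)" by (simp add: algebra_simps)
    then show "(\<forall>(x, y, z) \<in> P. k*a*x + k*b*y + k*c*z = 0) \<longleftrightarrow> (\<forall>(x, y, z) \<in> P. a*x + b*y + c*z = 0)"
      using assms by auto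
  qed
  then show ?thesis unfolding lineof_def by blast
qed


lemma alg:
  fixes a b c x y z x' y' z' :: "'a::field"
  assumes "c \<noteq> 0" "a*x+b*y+c*z = 0" "a*x'+b*y'+c*z' = 0" "(x,y,z) \<noteq> (0,0,0)" "(x',y',z') \<noteq> (0,0,0)"
    "(y = 0 \<longleftrightarrow> y' = 0)" "(y \<noteq> 0 \<longrightarrow> x/y = x'/y')"
  shows "\<exists>k. k\<noteq>0 \<and> x' = k*x \<and> y' = k*y \<and> z' = k*z"
proof -
  have z: "z = -(a*x+b*y)/c" and z': "z' = -(a*x'+b*y')/c" using assms(1-3)
    by (simp_all add: field_simps eq_neg_iff_add_eq_0 add.commute add.left_commute)
  show ?thesis
  proof (cases "y = 0")
    case False
    then have y': "y' \<noteq> 0" using assms(6) by simp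
    define t where "t = y'/y"
    have x': "x' = t*x" using assms(7) False y' by (simp add: field_simps t_def)
    have yy: "y' = t*y" using False by (simp add: t_def)
    have t0: "t \<noteq> 0" using False y' by (simp add: t_def)
    have "z' = -(a*(t*x)+b*(t*y))/c" using z' x' yy by simp
    also have "\<dots> = t*z" using z by (simp add: field_simps)
    finally show ?thesis using x' yy t0 by blast
  next
    case True
    then have y': "y' = 0" using assms(6) by simp
    have x: "x \<noteq> 0" using assms(4) True z by auto
    have x': "x' \<noteq> 0" using assms(5) y' z' by auto
    show ?thesis
      by (rule exI[of _ "x'/x"]) (use True y' x x' z z' in \<open>simp add: field_simps\<close>)
  qed
qed



lemma card_opt: "card (UNIV :: ('a::finite) option set) = card (UNIV :: 'a set) + 1"
  by (simp add: UNIV_option_conv card_image)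

lemma card_by_h:
  fixes h :: "'a::{finite,field} \<times> 'a \<times> 'a \<Rightarrow> 'a option" and a b c :: 'a
  assumes H: "\<And>x y z x' y' z'. a*x+b*y+c*z=0 \<Longrightarrow> a*x'+b*y'+c*z'=0 \<Longrightarrow> (x,y,z)\<noteq>(0,0,0)
     \<Longrightarrow> (x',y',z')\<noteq>(0,0,0) \<Longrightarrow> h (x,y,z) = h (x',y',z') \<Longrightarrow> \<exists>k. k\<noteq>0 \<and> x'=k*x \<and> y'=k*y \<and> z'=k*z"
  shows "card (lineof a b c) \<le> card (UNIV :: 'a set) + 1"
proof -
  define g where "g P = h (SOME v. v \<in> P)" for P :: "('a \<times> 'a \<times> 'a) set"
  have rep: "(SOME v. v \<in> P) \<in> P" if "P \<in> pg_points" for P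
    using pt_ex[OF that] by (rule someI_ex)
  have "inj_on g (lineof a b c)"
  proof (rule inj_onI)
    fix P P' assume P: "P \<in> lineof a b c" and P': "P' \<in> lineof a b c" and eq: "g P = g P'"
    have Pp: "P \<in> pg_points" and Pp': "P' \<in> pg_points" using P P' by (auto simp: lineof_def)
    obtain x y z where v: "(SOME v. v \<in> P) = (x, y, z)" by (rule prod_cases3)
    obtain x' y' z' where v': "(SOME v. v \<in> P') = (x', y', z')" by (rule prod_cases3)
    have in1: "(x,y,z) \<in> P" using rep[OF Pp] v by simp
    have in2: "(x',y',z') \<in> P'" using rep[OF Pp'] v' by simp
    have r1: "P = cls (x,y,z)" "(x,y,z) \<noteq> (0,0,0)" using pt_rep[OF Pp in1] by auto
    have r2: "P' = cls (x',y',z')" "(x',y',z') \<noteq> (0,0,0)" using pt_rep[OF Pp' in2] by auto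
    have e1: "a*x+b*y+c*z = 0" using P on_line[OF Pp in1, of a b c] by (auto simp: lineof_def)
    have e2: "a*x'+b*y'+c*z' = 0" using P' on_line[OF Pp' in2, of a b c] by (auto simp: lineof_def)
    have "h (x,y,z) = h (x',y',z')" using eq v v' by (simp add: g_def)
    then obtain k where k: "k\<noteq>0" "x'=k*x" "y'=k*y" "z'=k*z" using H[OF e1 e2 r1(2) r2(2)] by blast
    show "P = P'" using r1 r2 k cls_scale[of k x y z] by simp
  qed
  then have "card (lineof a b c) \<le> card (UNIV :: 'a option set)"
    by (rule card_inj_on_le) auto
  then show ?thesis using card_opt[where 'a='a] by simp
qed

lemma card_line:
  fixes a b c :: "'a::{finite,field}"
  assumes "(a,b,c) \<noteq> (0,0,0)"
  shows "card (lineof a b c) \<le> card (UNIV :: 'a set) + 1"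
proof -
  consider "c \<noteq> 0" | "a \<noteq> 0" | "b \<noteq> 0" using assms by auto
  then show ?thesis
  proof cases
    case 1
    show ?thesis
      by (rule card_by_h[where h="\<lambda>(x,y,z). if y = 0 then None else Some (x/y)"])
        (rule alg[OF 1], auto split: if_splits)
  next
    case 2
    show ?thesis
    proof (rule card_by_h[where h="\<lambda>(x,y,z). if z = 0 then None else Some (y/z)"])
      fix x y z x' y' z' :: 'a
      assume "a*x+b*y+c*z=0" "a*x'+b*y'+c*z'=0" "(x,y,z)\<noteq>(0,0,0)" "(x',y',z')\<noteq>(0,0,0)"
        "(\<lambda>(x,y,z). if z = 0 then None else Some (y/z)) (x,y,z) = (\<lambda>(x,y,z). if z = 0 then None else Some (y/z)) (x',y',z')"
      then have "\<exists>k. k\<noteq>0 \<and> y'=k*y \<and> z'=k*z \<and> x'=k*x"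
        apply -
        apply (rule alg[where a=b and b=c and c=a and x=y and y=z and z=x and x'=y' and y'=z' and z'=x', OF 2])
        by (auto simp: algebra_simps split: if_splits)
      then show "\<exists>k. k\<noteq>0 \<and> x'=k*x \<and> y'=k*y \<and> z'=k*z" by blast
    qed
  next
    case 3
    show ?thesis
    proof (rule card_by_h[where h="\<lambda>(x,y,z). if x = 0 then None else Some (z/x)"])
      fix x y z x' y' z' :: 'a
      assume "a*x+b*y+c*z=0" "a*x'+b*y'+c*z'=0" "(x,y,z)\<noteq>(0,0,0)" "(x',y',z')\<noteq>(0,0,0)"
        "(\<lambda>(x,y,z). if x = 0 then None else Some (z/x)) (x,y,z) = (\<lambda>(x,y,z). if x = 0 then None else Some (z/x)) (x',y',z')"
      then have "\<exists>k. k\<noteq>0 \<and> z'=k*z \<and> x'=k*x \<and> y'=k*y"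
        apply -
        apply (rule alg[where a=c and b=a and c=b and x=z and y=x and z=y and x'=z' and y'=x' and z'=y', OF 3])
        by (auto simp: algebra_simps split: if_splits)
      then show "\<exists>k. k\<noteq>0 \<and> x'=k*x \<and> y'=k*y \<and> z'=k*z" by blast
    qed
  qed
qed

lemma card_line': "l \<in> pg_lines \<Longrightarrow> card (l :: ('a::{finite,field} \<times> 'a \<times> 'a) set set) \<le> card (UNIV :: 'a set) + 1"
  unfolding lines_eq using card_line by blast



lemma lineof_in: "((a::'a::field),b,c) \<noteq> (0,0,0) \<Longrightarrow> lineof a b c \<in> pg_lines"
  unfolding lines_eq by blast

lemma in_lineof:
  assumes "P \<in> pg_points" "((x::'a::field),y,z) \<in> P"
  shows "P \<in> lineof a b c \<longleftrightarrow> a*x+b*y+c*z = 0"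
  using on_line[OF assms] assms(1) unfolding lineof_def by blast

lemma lines_through:
  fixes Q :: "('a::{finite,field} \<times> 'a \<times> 'a) set"
  assumes Q: "Q \<in> pg_points"
  shows "card {l \<in> pg_lines. Q \<in> l} \<le> card (UNIV :: ('a::{finite,field}) set) + 1"
proof -
  obtain u1 u2 u3 :: 'a where u: "(u1,u2,u3) \<noteq> (0,0,0)" "Q = cls (u1,u2,u3)"
    using Q by (rule pt_cases)
  have uQ: "(u1,u2,u3) \<in> Q" using u cls_self by simp
  define W where "W l = (SOME w. w \<noteq> (0,0,0) \<and> l = lineof (fst w) (fst (snd w)) (snd (snd w)))"
    for l :: "('a \<times> 'a \<times> 'a) set set"
  have W: "W l \<noteq> (0,0,0) \<and> l = lineof (fst (W l)) (fst (snd (W l))) (snd (snd (W l)))"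
    if "l \<in> pg_lines" for l
  proof -
    from that obtain a b c where "(a,b,c) \<noteq> (0,0,0)" "l = lineof a b c" unfolding lines_eq by blast
    then have "\<exists>w. w \<noteq> (0,0,0) \<and> l = lineof (fst w) (fst (snd w)) (snd (snd w))"
      by (intro exI[of _ "(a,b,c)"]) simp
    then show ?thesis unfolding W_def by (rule someI_ex)
  qed
  define g where "g l = cls (W l)" for l
  have "inj_on g {l \<in> pg_lines. Q \<in> l}"
  proof (rule inj_onI)
    fix l l' assume l: "l \<in> {l \<in> pg_lines. Q \<in> l}" and l': "l' \<in> {l \<in> pg_lines. Q \<in> l}"
      and eq: "g l = g l'"
    obtain a b c where w: "W l = (a,b,c)" by (rule prod_cases3)
    obtain a' b' c' where w': "W l' = (a',b',c')" by (rule prod_cases3)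
    have h1: "(a,b,c) \<noteq> (0,0,0)" "l = lineof a b c" using W[of l] l w by auto
    have h2: "(a',b',c') \<noteq> (0,0,0)" "l' = lineof a' b' c'" using W[of l'] l' w' by auto
    have "(a',b',c') \<in> cls (a,b,c)" using eq w w' cls_self[of a' b' c'] by (simp add: g_def)
    then obtain k where k: "k \<noteq> 0" "a' = k*a" "b' = k*b" "c' = k*c" using mem_cls by blast
    show "l = l'" using h1 h2 k lineof_scale[of k a b c] by simp
  qed
  moreover have "g ` {l \<in> pg_lines. Q \<in> l} \<subseteq> lineof u1 u2 u3"
  proof
    fix P assume "P \<in> g ` {l \<in> pg_lines. Q \<in> l}"
    then obtain l where l: "l \<in> pg_lines" "Q \<in> l" "P = g l" by blast
    obtain a b c where w: "W l = (a,b,c)" by (rule prod_cases3)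
    have h1: "(a,b,c) \<noteq> (0,0,0)" "l = lineof a b c" using W[of l] l w by auto
    have P: "P = cls (a,b,c)" using l w by (simp add: g_def)
    have Pp: "P \<in> pg_points" using P h1 cls_pt by simp
    have "a*u1+b*u2+c*u3 = 0" using in_lineof[OF Q uQ] l h1 by simp
    then have "u1*a+u2*b+u3*c = 0" by (simp add: mult.commute)
    moreover have abcP: "(a,b,c) \<in> P" using P cls_self by simp
    ultimately show "P \<in> lineof u1 u2 u3" using in_lineof[OF Pp abcP] by simp
  qed
  ultimately have "card {l \<in> pg_lines. Q \<in> l} \<le> card (lineof u1 u2 u3)"
    by (rule card_inj_on_le) simp
  also have "\<dots> \<le> card (UNIV :: 'a set) + 1" using card_line u(1) by blast
  finally show ?thesis .
qed

lemma cross0: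
  fixes u1 u2 u3 v1 v2 v3 :: "'a::field"
  assumes "(u1,u2,u3) \<noteq> (0,0,0)" "(v1,v2,v3) \<noteq> (0,0,0)"
    "u2*v3 - u3*v2 = 0" "u3*v1 - u1*v3 = 0" "u1*v2 - u2*v1 = 0"
  shows "\<exists>k. k \<noteq> 0 \<and> v1 = k*u1 \<and> v2 = k*u2 \<and> v3 = k*u3"
proof -
  consider "u1 \<noteq> 0" | "u2 \<noteq> 0" | "u3 \<noteq> 0" using assms(1) by auto
  then show ?thesis
  proof cases
    case 1
    have "v1 = (v1/u1)*u1" using 1 by simp
    moreover have "v2 = (v1/u1)*u2" using 1 assms(5) by (simp add: field_simps)
    moreover have "v3 = (v1/u1)*u3" using 1 assms(4) by (simp add: field_simps)
    moreover have "v1/u1 \<noteq> 0" using calculation assms(2) by auto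
    ultimately show ?thesis by blast
  next
    case 2
    have "v1 = (v2/u2)*u1" using 2 assms(5) by (simp add: field_simps)
    moreover have "v2 = (v2/u2)*u2" using 2 by simp
    moreover have "v3 = (v2/u2)*u3" using 2 assms(3) by (simp add: field_simps)
    moreover have "v2/u2 \<noteq> 0" using calculation assms(2) by auto
    ultimately show ?thesis by blast
  next
    case 3
    have "v1 = (v3/u3)*u1" using 3 assms(4) by (simp add: field_simps)
    moreover have "v2 = (v3/u3)*u2" using 3 assms(3) by (simp add: field_simps)
    moreover have "v3 = (v3/u3)*u3" using 3 by simp
    moreover have "v3/u3 \<noteq> 0" using calculation assms(2) by auto
    ultimately show ?thesis by blast
  qed
qed

lemma line_through_two:
  assumes Q: "Q \<in> pg_points" and R: "R \<in> pg_points" and ne: "Q \<noteq> R"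
  shows "\<exists>l \<in> pg_lines. Q \<in> l \<and> R \<in> (l :: ('a::field \<times> 'a \<times> 'a) set set)"
proof -
  obtain u1 u2 u3 :: 'a where u: "(u1,u2,u3) \<noteq> (0,0,0)" "Q = cls (u1,u2,u3)"
    using Q by (rule pt_cases)
  obtain v1 v2 v3 :: 'a where v: "(v1,v2,v3) \<noteq> (0,0,0)" "R = cls (v1,v2,v3)"
    using R by (rule pt_cases)
  have uQ: "(u1,u2,u3) \<in> Q" using u cls_self by simp
  have vR: "(v1,v2,v3) \<in> R" using v cls_self by simp
  define a b c where "a = u2*v3 - u3*v2" "b = u3*v1 - u1*v3" "c = u1*v2 - u2*v1"
  have nz: "(a,b,c) \<noteq> (0,0,0)"
  proof
    assume "(a,b,c) = (0,0,0)"
    then obtain k where k: "k \<noteq> 0" "v1 = k*u1" "v2 = k*u2" "v3 = k*u3"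
      using cross0[OF u(1) v(1)] by (auto simp: a_b_c_def)
    then have "R = Q" using u v cls_scale[of k u1 u2 u3] by simp
    then show False using ne by simp
  qed
  have "a*u1+b*u2+c*u3 = 0" "a*v1+b*v2+c*v3 = 0" unfolding a_b_c_def by (simp_all add: algebra_simps)
  then have "Q \<in> lineof a b c" "R \<in> lineof a b c"
    using in_lineof[OF Q uQ] in_lineof[OF R vR] by simp_all
  then show ?thesis using lineof_in[OF nz] by blast
qed



lemma card_points: "card (pg_points :: ('a::{finite,field} \<times> 'a \<times> 'a) set set)
   \<le> card (UNIV :: 'a set) * card (UNIV :: 'a set) + card (UNIV :: 'a set) + 1"
proof -
  let ?q = "card (UNIV :: 'a set)"
  define N :: "('a \<times> 'a \<times> 'a) set" where
    "N = (\<lambda>(x,y). (x,y,1)) ` UNIV \<union> (\<lambda>x. (x,1,0)) ` UNIV \<union> {(1,0,0)}"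
  have cN: "card N \<le> ?q * ?q + ?q + 1"
  proof -
    have "card ((\<lambda>(x,y). (x,y,1::'a)) ` (UNIV :: ('a\<times>'a) set)) \<le> card (UNIV :: ('a\<times>'a) set)"
      by (rule card_image_le) simp
    also have "\<dots> = ?q * ?q" by (simp flip: UNIV_Times_UNIV add: card_cartesian_product)
    finally have 1: "card ((\<lambda>(x,y). (x,y,1::'a)) ` (UNIV :: ('a\<times>'a) set)) \<le> ?q * ?q" .
    have 2: "card ((\<lambda>x. (x,1::'a,0::'a)) ` (UNIV :: 'a set)) \<le> ?q" by (rule card_image_le) simp
    define A where "A = (\<lambda>(x,y). (x,y,1::'a)) ` (UNIV :: ('a\<times>'a) set)"
    define B where "B = (\<lambda>x. (x,1::'a,0::'a)) ` (UNIV :: 'a set)"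
    have "card N \<le> card (A \<union> B) + card {(1::'a,0::'a,0::'a)}"
      unfolding N_def A_def B_def by (rule card_Un_le)
    moreover have "card (A \<union> B) \<le> card A + card B" by (rule card_Un_le)
    ultimately have "card N \<le> card A + card B + 1" by simp
    then show ?thesis using 1 2 unfolding A_def B_def by simp
  qed
  have ex: "\<exists>n. n \<in> P \<inter> N" if Pp: "P \<in> pg_points" for P
  proof -
    obtain x y z :: 'a where u: "(x,y,z) \<noteq> (0,0,0)" "P = cls (x,y,z)" using Pp by (rule pt_cases)
    consider "z \<noteq> 0" | "z = 0" "y \<noteq> 0" | "z = 0" "y = 0" "x \<noteq> 0" using u(1) by auto
    then show ?thesis
    proof cases
      case 1
      have "(x/z, y/z, 1) \<in> P" unfolding u(2) mem_cls using 1
        by (intro exI[of _ "1/z"]) simp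
      moreover have "(x/z, y/z, 1) \<in> N" unfolding N_def by auto
      ultimately show ?thesis by blast
    next
      case 2
      have "(x/y, 1, 0) \<in> P" unfolding u(2) mem_cls using 2
        by (intro exI[of _ "1/y"]) simp
      moreover have "(x/y, 1, 0) \<in> N" unfolding N_def by auto
      ultimately show ?thesis by blast
    next
      case 3
      have "(1, 0, 0) \<in> P" unfolding u(2) mem_cls using 3
        by (intro exI[of _ "1/x"]) simp
      moreover have "(1, 0, 0) \<in> N" unfolding N_def by auto
      ultimately show ?thesis by blast
    qed
  qed
  define g where "g P = (SOME n. n \<in> P \<inter> N)" for P :: "('a \<times> 'a \<times> 'a) set"
  have g: "g P \<in> P \<inter> N" if "P \<in> pg_points" for P
    unfolding g_def using ex[OF that] by (rule someI_ex)
  have "inj_on g pg_points"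
  proof (rule inj_onI)
    fix P P' assume P: "P \<in> pg_points" and P': "P' \<in> pg_points" and eq: "g P = g P'"
    obtain x y z where v: "g P = (x,y,z)" by (rule prod_cases3)
    have "P = cls (x,y,z)" using pt_rep[OF P] g[OF P] v by auto
    moreover have "P' = cls (x,y,z)" using pt_rep[OF P'] g[OF P'] v eq by auto
    ultimately show "P = P'" by simp
  qed
  moreover have "g ` pg_points \<subseteq> N" using g by blast
  ultimately have "card (pg_points :: ('a \<times> 'a \<times> 'a) set set) \<le> card N"
    by (rule card_inj_on_le) simp
  then show ?thesis using cN by simp
qed

lemma choose2_ge: "k \<le> (k choose 2) + (1::nat)"
proof (cases k)
  case (Suc n)
  then have "k choose 2 = n + (n choose 2)" by (simp add: numeral_2_eq_2)
  then show ?thesis using Suc by simp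
qed simp

lemma choose2_gt: assumes "3 \<le> (k::nat)" shows "k < (k choose 2) + 1"
proof (cases k)
  case (Suc n)
  then have "k choose 2 = n + (n choose 2)" by (simp add: numeral_2_eq_2)
  moreover have "0 < n choose 2" using Suc assms by simp
  ultimately show ?thesis using Suc by simp
qed (use assms in simp)



lemma secant_bound:
  fixes T :: "('a::{finite,field} \<times> 'a \<times> 'a) set set" and Q
  assumes Q: "Q \<in> pg_points" and QT: "Q \<notin> T" and T: "T \<subseteq> pg_points"
  shows "card T \<le> secant_mult T Q + (card (UNIV :: 'a set) + 1)"
    and "2 * card (UNIV :: 'a set) + 3 \<le> card T \<Longrightarrow> card T \<le> secant_mult T Q + card (UNIV :: 'a set)"
proof -
  let ?q = "card (UNIV :: 'a set)"
  define Ls where "Ls = {l \<in> pg_lines. Q \<in> l}"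
  define k where "k l = card (l \<inter> T)" for l
  have fin: "finite Ls" by simp
  have cL: "card Ls \<le> ?q + 1" unfolding Ls_def by (rule lines_through[OF Q])
  have sm: "secant_mult T Q = (\<Sum>l\<in>Ls. k l choose 2)"
  proof -
    have "secant_mult T Q = (\<Sum>l\<in>{l\<in>Ls. 2 \<le> k l}. k l choose 2)"
      unfolding secant_mult_def Ls_def k_def by (rule sum.cong) auto
    also have "\<dots> = (\<Sum>l\<in>Ls. if 2 \<le> k l then k l choose 2 else 0)"
      by (rule sum.inter_filter[OF fin])
    also have "\<dots> = (\<Sum>l\<in>Ls. k l choose 2)"
      by (rule sum.cong) auto
    finally show ?thesis .
  qed
  have cover: "card T \<le> (\<Sum>l\<in>Ls. k l)"
  proof -
    have "T \<subseteq> (\<Union>l\<in>Ls. l \<inter> T)"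
    proof
      fix R assume R: "R \<in> T"
      then have "Q \<noteq> R" using QT by auto
      then obtain l where "l \<in> pg_lines" "Q \<in> l" "R \<in> l"
        using line_through_two[OF Q] R T by blast
      then show "R \<in> (\<Union>l\<in>Ls. l \<inter> T)" using R Ls_def by blast
    qed
    then have "card T \<le> card (\<Union>l\<in>Ls. l \<inter> T)" by (intro card_mono) simp_all
    also have "\<dots> \<le> (\<Sum>l\<in>Ls. card (l \<inter> T))" by (rule card_UN_le[OF fin])
    finally show ?thesis unfolding k_def .
  qed
  have s1: "(\<Sum>l\<in>Ls. (k l choose 2) + 1) = (\<Sum>l\<in>Ls. k l choose 2) + card Ls"
    by (simp add: sum.distrib del: plus_1_eq_Suc add_Suc_right)
  have "(\<Sum>l\<in>Ls. k l) \<le> (\<Sum>l\<in>Ls. (k l choose 2) + 1)"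
    by (rule sum_mono) (rule choose2_ge)
  then show "card T \<le> secant_mult T Q + (?q + 1)" using cover s1 sm cL by linarith
  assume big: "2 * ?q + 3 \<le> card T"
  show "card T \<le> secant_mult T Q + ?q"
  proof (cases "\<exists>l\<in>Ls. 3 \<le> k l")
    case True
    have "(\<Sum>l\<in>Ls. k l) < (\<Sum>l\<in>Ls. (k l choose 2) + 1)"
      by (rule sum_strict_mono_ex1[OF fin]) (use choose2_ge choose2_gt True in auto)
    then show ?thesis using cover s1 sm cL by linarith
  next
    case False
    then have "(\<Sum>l\<in>Ls. k l) \<le> (\<Sum>l\<in>Ls. 2)" by (intro sum_mono) auto
    also have "\<dots> = 2 * card Ls" by simp
    finally show ?thesis using cover cL big by linarith
  qed
qed



theorem proposition6p1:
  fixes S :: "('a::{finite,field} \<times> 'a \<times> 'a) set set" and \<mu> :: nat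
    and q :: nat
  assumes "q = card (UNIV :: 'a set)" and "\<mu> > 0" and "minimal_saturating \<mu> S"
  shows "\<mu> \<le> (q + 1) * (q choose 2) \<and>
         (\<mu> \<le> q + 2 \<longrightarrow> card S \<le> q + \<mu> + 1) \<and>
         (\<mu> \<ge> q + 3 \<longrightarrow> card S \<le> min (q + \<mu>) (q^2 + q))"
proof -
  have sat: "saturating \<mu> S" and nosub: "\<not> (\<exists>T \<subseteq> S. saturating \<mu> T \<and> card T = card S - 1)"
    using assms(3) unfolding minimal_saturating_def by auto
  have Sp: "S \<subseteq> pg_points" and span: "pg_spans S" and Sne: "S \<noteq> pg_points"
    and cov: "\<forall>Q \<in> pg_points - S. secant_mult S Q \<ge> \<mu>"
    using sat unfolding saturating_def by auto
  obtain Q where Q: "Q \<in> pg_points" "Q \<notin> S" using Sp Sne by blast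
  have i: "\<mu> \<le> (q + 1) * (q choose 2)"
  proof -
    define Ls where "Ls = {l \<in> pg_lines. Q \<in> l}"
    define Ls' where "Ls' = {l \<in> pg_lines. Q \<in> l \<and> card (l \<inter> S) \<ge> 2}"
    have "\<mu> \<le> secant_mult S Q" using cov Q by blast
    also have "\<dots> = (\<Sum>l\<in>Ls'. card (l \<inter> S) choose 2)" unfolding secant_mult_def Ls'_def ..
    also have "\<dots> \<le> (\<Sum>l\<in>Ls'. q choose 2)"
    proof (rule sum_mono)
      fix l assume l: "l \<in> Ls'"
      have "l \<inter> S \<subseteq> l - {Q}" using Q by auto
      then have "card (l \<inter> S) \<le> card (l - {Q})" by (intro card_mono) simp_all
      also have "\<dots> = card l - 1" using l Ls'_def by simp
      also have "\<dots> \<le> q" using card_line'[of l] l Ls'_def assms(1) by simp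
      finally show "card (l \<inter> S) choose 2 \<le> q choose 2" by (rule binomial_right_mono)
    qed
    also have "\<dots> = card Ls' * (q choose 2)" by simp
    also have "\<dots> \<le> card Ls * (q choose 2)"
      by (intro mult_right_mono card_mono) (auto simp: Ls_def Ls'_def)
    also have "\<dots> \<le> (q + 1) * (q choose 2)"
      by (intro mult_right_mono) (use lines_through[OF Q(1)] assms(1) Ls_def in simp_all)
    finally show ?thesis .
  qed
  have key: False if big: "q + \<mu> + 2 \<le> card S \<or> (q + 3 \<le> \<mu> \<and> q + \<mu> + 1 \<le> card S)"
  proof -
    have "lineof (1::'a) 0 0 \<in> pg_lines" by (rule lineof_in) simp
    then have "S \<noteq> {}" using span unfolding pg_spans_def by blast
    then obtain P where P: "P \<in> S" by blast
    define T where "T = S - {P}"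
    have fS: "finite S" by simp
    have cT: "card T = card S - 1" using P fS by (simp add: T_def)
    have TS: "T \<subseteq> S" by (auto simp: T_def)
    have Tp: "T \<subseteq> pg_points" using TS Sp by blast
    have cT2: "q + 2 \<le> card T" using cT big assms(2) by auto
    have "saturating \<mu> T"
      unfolding saturating_def
    proof (intro conjI ballI)
      show "T \<subseteq> pg_points" by (rule Tp)
      show "pg_spans T" unfolding pg_spans_def
      proof
        assume "\<exists>l\<in>pg_lines. T \<subseteq> l"
        then obtain l where l: "l \<in> pg_lines" "T \<subseteq> l" by blast
        have "card T \<le> card l" using l by (intro card_mono) simp_all
        also have "\<dots> \<le> q + 1" using card_line'[OF l(1)] assms(1) by simp
        finally show False using cT2 by simp
      qed
      show "T \<noteq> pg_points" using P Sp by (auto simp: T_def)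
      fix R assume R: "R \<in> pg_points - T"
      have b1: "card T \<le> secant_mult T R + (q + 1)"
        using secant_bound(1)[of R T] R Tp assms(1) by blast
      show "\<mu> \<le> secant_mult T R"
      proof (cases "q + \<mu> + 2 \<le> card S")
        case True
        then show ?thesis using b1 cT by linarith
      next
        case False
        then have h: "q + 3 \<le> \<mu>" "q + \<mu> + 1 \<le> card S" using big by auto
        then have "2 * q + 3 \<le> card T" using cT by linarith
        then have "card T \<le> secant_mult T R + q"
          using secant_bound(2)[of R T] R Tp assms(1) by blast
        then show ?thesis using h cT by linarith
      qed
    qed
    then show False using nosub TS cT by blast
  qed
  have cp: "card S < card (pg_points :: ('a \<times> 'a \<times> 'a) set set)"
    using Sp Sne by (intro psubset_card_mono) auto
  have "card S \<le> q^2 + q"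
    using cp card_points[where 'a='a] assms(1) by (simp add: power2_eq_square)
  moreover have A: "\<not> (q + \<mu> + 2 \<le> card S)" using key by blast
  moreover have B: "q + 3 \<le> \<mu> \<Longrightarrow> \<not> (q + \<mu> + 1 \<le> card S)" using key by blast
  ultimately show ?thesis using i by (auto simp: min_def)
qed

end
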